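(* Let $G$ be a $P_5$-free graph and let $D=\{d_1,\dots,d_m\}\subseteq V(G)$. Define $X_1 := N(d_1)\setminus D$ and, for $i\in\{2,\dots,m\}$, $X_i := N(d_i)\setminus (X_1\cup\dots\cup X_{i-1}\cup D)$. Let $1\le i<j\le m$, let $I\subseteq X_i$ be an independent set in $G$, and let $P := N(I)\cap X_j$. Then there exists $I'\subseteq I$ with $|I'|\le 2$ such that every vertex of $P$ has a neighbor in $I'$.
   Context: $N(v)$ denotes the open neighborhood of $v$ in $G$ and $N(I)=\bigcup_{v\in I}N(v)$. A graph is $P_5$-free if it has no induced path on 5 vertices. *)

theory Defs
  imports Main
begin

definition simple_graph :: "'a set \<Rightarrow> ('a \<Rightarrow> 'a \<Rightarrow> bool) \<Rightarrow> bool" where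
  "simple_graph V E \<longleftrightarrow> finite V \<and> (\<forall>u v. E u v \<longrightarrow> E v u)
     \<and> (\<forall>v. \<not> E v v) \<and> (\<forall>u v. E u v \<longrightarrow> u \<in> V \<and> v \<in> V)"

definition nbr :: "'a set \<Rightarrow> ('a \<Rightarrow> 'a \<Rightarrow> bool) \<Rightarrow> 'a \<Rightarrow> 'a set" where
  "nbr V E v = {u \<in> V. E v u}"

definition nbr_set :: "'a set \<Rightarrow> ('a \<Rightarrow> 'a \<Rightarrow> bool) \<Rightarrow> 'a set \<Rightarrow> 'a set" where
  "nbr_set V E I = (\<Union>v\<in>I. nbr V E v)"

definition independent :: "'a set \<Rightarrow> ('a \<Rightarrow> 'a \<Rightarrow> bool) \<Rightarrow> 'a set \<Rightarrow> bool" where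
  "independent V E I \<longleftrightarrow> I \<subseteq> V \<and> (\<forall>u\<in>I. \<forall>v\<in>I. \<not> E u v)"

definition induced_P5 :: "'a set \<Rightarrow> ('a \<Rightarrow> 'a \<Rightarrow> bool) \<Rightarrow> (nat \<Rightarrow> 'a) \<Rightarrow> bool" where
  "induced_P5 V E p \<longleftrightarrow> (\<forall>i<5. p i \<in> V) \<and> inj_on p {..<5}
     \<and> (\<forall>i<5. \<forall>j<5. E (p i) (p j) \<longleftrightarrow> (i = j + 1 \<or> j = i + 1))"

definition P5_free :: "'a set \<Rightarrow> ('a \<Rightarrow> 'a \<Rightarrow> bool) \<Rightarrow> bool" where
  "P5_free V E \<longleftrightarrow> \<not> (\<exists>p. induced_P5 V E p)"

text \<open>The sets X_i for D = {d 1, ..., d m}: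
  X_i = N(d_i) - (X_1 \<union> ... \<union> X_(i-1) \<union> D); X_0 is unused (empty).\<close>
function Xset :: "'a set \<Rightarrow> ('a \<Rightarrow> 'a \<Rightarrow> bool) \<Rightarrow> (nat \<Rightarrow> 'a) \<Rightarrow> 'a set \<Rightarrow> nat \<Rightarrow> 'a set" where
  "Xset V E d D i = (if i = 0 then {}
     else nbr V E (d i) - ((\<Union>k\<in>{1..<i}. Xset V E d D k) \<union> D))"
  by pat_completeness auto
termination by (relation "measure (\<lambda>(V,E,d,D,i). i)") auto

end

theory Submission
  imports Defs
begin

declare Xset.simps[simp del]

lemma Xset_eq: "0 < i \<Longrightarrow> Xset V E d D i = nbr V E (d i) - ((\<Union>k\<in>{1..<i}. Xset V E d D k) \<union> D)"
  by (subst Xset.simps) simp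

lemma Xset_sub: "Xset V E d D i \<subseteq> nbr V E (d i) - D"
proof (cases "i = 0")
  case True
  then show ?thesis by (subst Xset.simps) simp
next
  case False
  then show ?thesis by (auto simp: Xset_eq)
qed

lemma Xset_later: assumes "0 < i" "i < j" "p \<in> Xset V E d D j" "p \<in> V"
  shows "\<not> E (d i) p"
proof
  assume e: "E (d i) p"
  have pD: "p \<notin> D" and pn: "p \<notin> (\<Union>k\<in>{1..<j}. Xset V E d D k)"
    using assms(3) Xset_eq[of j V E d D] assms(1,2) by auto
  have "p \<in> nbr V E (d i)" using e assms(4) by (simp add: nbr_def)
  hence "p \<in> Xset V E d D i \<or> p \<in> (\<Union>k\<in>{1..<i}. Xset V E d D k)"
    using Xset_eq[of i V E d D] assms(1) pD by auto
  thus False using pn assms(1,2) by fastforce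
qed

lemma mkP5:
  assumes sg: "simple_graph V E"
    and V: "a0 \<in> V" "a1 \<in> V" "a2 \<in> V" "a3 \<in> V" "a4 \<in> V"
    and dist: "distinct [a0,a1,a2,a3,a4]"
    and e: "E a0 a1" "E a1 a2" "E a2 a3" "E a3 a4"
    and n: "\<not> E a0 a2" "\<not> E a0 a3" "\<not> E a0 a4" "\<not> E a1 a3" "\<not> E a1 a4" "\<not> E a2 a4"
  shows "\<not> P5_free V E"
proof -
  have sym: "\<And>u v. E u v \<Longrightarrow> E v u" and irr: "\<And>v. \<not> E v v"
    using sg by (auto simp: simple_graph_def)
  define p where "p = (\<lambda>n. [a0,a1,a2,a3,a4] ! n)"
  have all5: "\<And>Q. (\<forall>i<(5::nat). Q i) \<longleftrightarrow> Q 0 \<and> Q 1 \<and> Q 2 \<and> Q 3 \<and> Q 4"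
    by (auto simp: less_Suc_eq numeral_eq_Suc)
  have inj: "inj_on p {..<5}"
  proof (rule inj_onI)
    fix x y assume "x \<in> {..<(5::nat)}" "y \<in> {..<5}" "p x = p y"
    thus "x = y" using dist unfolding p_def
      by (simp add: nth_eq_iff_index_eq del: distinct.simps)
  qed
  have "induced_P5 V E p"
    unfolding induced_P5_def
    using V inj e n irr sym[OF e(1)] sym[OF e(2)] sym[OF e(3)] sym[OF e(4)]
    by (simp add: all5 p_def) (metis sym)
  thus ?thesis by (auto simp: P5_free_def)
qed

theorem claim3p2:
  fixes V :: "'a set" and E :: "'a \<Rightarrow> 'a \<Rightarrow> bool" and d :: "nat \<Rightarrow> 'a"
    and m i j :: nat and I :: "'a set"
  assumes "simple_graph V E"
    and "P5_free V E"
    and "\<forall>k\<in>{1..m}. d k \<in> V"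
    and "inj_on d {1..m}"
    and "1 \<le> i" and "i < j" and "j \<le> m"
    and "I \<subseteq> Xset V E d (d ` {1..m}) i"
    and "independent V E I"
  shows "\<exists>I' \<subseteq> I. finite I' \<and> card I' \<le> 2 \<and>
           (\<forall>p \<in> nbr_set V E I \<inter> Xset V E d (d ` {1..m}) j. \<exists>u \<in> I'. E p u)"
proof -
  define D where "D = d ` {1..m}"
  define P where "P = nbr_set V E I \<inter> Xset V E d D j"
  have sg: "finite V" "\<And>u v. E u v \<Longrightarrow> E v u" "\<And>v. \<not> E v v" "\<And>u v. E u v \<Longrightarrow> u \<in> V \<and> v \<in> V"
    using assms(1) by (auto simp: simple_graph_def)
  have IV: "I \<subseteq> V" using assms(9) by (simp add: independent_def)
  have ind: "\<And>u v. u \<in> I \<Longrightarrow> v \<in> I \<Longrightarrow> \<not> E u v" using assms(9) by (simp add: independent_def)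
  have finI: "finite I" using IV sg(1) finite_subset by blast
  have dD: "d i \<in> D" "d i \<in> V" using assms(3,5,6,7) by (auto simp: D_def)
  have Iprop: "\<And>u. u \<in> I \<Longrightarrow> E (d i) u \<and> u \<notin> D \<and> u \<in> V"
    using assms(8) Xset_sub[of V E d D i] by (auto simp: D_def nbr_def)
  have Pprop: "\<And>p. p \<in> P \<Longrightarrow> \<not> E (d i) p \<and> p \<notin> D \<and> p \<in> V \<and> (\<exists>u\<in>I. E p u)"
  proof -
    fix p assume p: "p \<in> P"
    have pX: "p \<in> Xset V E d D j" using p by (simp add: P_def)
    have pV: "p \<in> V" "p \<notin> D" using Xset_sub[of V E d D j] pX by (auto simp: nbr_def)
    moreover have "\<not> E (d i) p" using Xset_later[OF _ assms(6) pX pV(1)] assms(5) by simp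
    moreover have "\<exists>u\<in>I. E p u" using p sg(2) by (auto simp: P_def nbr_set_def nbr_def)
    ultimately show "\<not> E (d i) p \<and> p \<notin> D \<and> p \<in> V \<and> (\<exists>u\<in>I. E p u)" by blast
  qed
  define S where "S = {J. J \<subseteq> I \<and> (\<forall>p\<in>P. \<exists>u\<in>J. E p u)}"
  have "I \<in> S" using Pprop by (auto simp: S_def)
  then obtain I0 where I0: "I0 \<in> S" and min: "\<And>J. J \<in> S \<Longrightarrow> card I0 \<le> card J"
    using ex_has_least_nat[of "\<lambda>J. J \<in> S" I card] by blast
  have I0I: "I0 \<subseteq> I" and cov: "\<forall>p\<in>P. \<exists>u\<in>I0. E p u" using I0 by (auto simp: S_def)
  have finI0: "finite I0" using I0I finI finite_subset by blast
  have priv: "\<exists>p\<in>P. E p u \<and> (\<forall>w\<in>I0. w \<noteq> u \<longrightarrow> \<not> E p w)" if u: "u \<in> I0" for u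
  proof (rule ccontr)
    assume "\<not> ?thesis"
    hence "I0 - {u} \<in> S" using cov I0I unfolding S_def by blast
    hence "card I0 \<le> card (I0 - {u})" by (rule min)
    moreover have "card (I0 - {u}) < card I0" using finI0 u by (meson card_Diff1_less)
    ultimately show False by simp
  qed
  have "card I0 \<le> 2"
  proof (rule ccontr)
    assume "\<not> card I0 \<le> 2"
    hence c: "2 < card I0" by simp
    obtain u1 u2 u3 where us: "u1 \<in> I0" "u2 \<in> I0" "u3 \<in> I0" "u1 \<noteq> u2" "u1 \<noteq> u3" "u2 \<noteq> u3"
    proof -
      obtain u1 where u1: "u1 \<in> I0" using c by (metis card.empty equals0I not_less_zero)
      have "1 < card (I0 - {u1})" using c u1 finI0 by simp
      then obtain u2 where u2: "u2 \<in> I0 - {u1}" by (metis card.empty equals0I not_less_zero)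
      have "0 < card (I0 - {u1} - {u2})" using c u1 u2 finI0 by simp
      then obtain u3 where u3: "u3 \<in> I0 - {u1} - {u2}" by (metis card.empty equals0I less_irrefl)
      show ?thesis using that u1 u2 u3 by blast
    qed
    have uI: "u1 \<in> I" "u2 \<in> I" "u3 \<in> I" using us I0I by auto
    obtain p2 where p2: "p2 \<in> P" "E p2 u2" "\<not> E p2 u1" "\<not> E p2 u3" using priv[OF us(2)] us by metis
    obtain p3 where p3: "p3 \<in> P" "E p3 u3" "\<not> E p3 u1" "\<not> E p3 u2" using priv[OF us(3)] us by metis
    note P2 = Pprop[OF p2(1)] and P3 = Pprop[OF p3(1)]
    note U1 = Iprop[OF uI(1)] and U2 = Iprop[OF uI(2)] and U3 = Iprop[OF uI(3)]
    have ne: "p2 \<noteq> p3" using p2 p3 by blast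
    have "E p2 p3"
    proof (rule ccontr)
      assume np: "\<not> E p2 p3"
      have "\<not> P5_free V E"
        apply (rule mkP5[OF assms(1), of p2 u2 "d i" u3 p3])
        using P2 P3 U2 U3 dD p2 p3 np ind[OF uI(2) uI(3)] us ne sg(2)
        by auto
      thus False using assms(2) by simp
    qed
    have "\<not> P5_free V E"
      apply (rule mkP5[OF assms(1), of u1 "d i" u2 p2 p3])
      using P2 P3 U1 U2 dD p2 p3 ind[OF uI(1) uI(2)] us ne sg(2) \<open>E p2 p3\<close>
      by auto
    thus False using assms(2) by simp
  qed
  thus ?thesis using I0I finI0 cov by (auto simp: P_def D_def)
qed

end
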